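(* Let $(X,\mathcal{A},\mu)$ be a probability space, $\theta$ a measure-preserving endomorphism and $A\subset X$ a hole. Then the map $\varphi\mapsto\rho(A,\varphi)$, defined on the set of bounded ceiling functions $\varphi$ for which the escape rate $\rho(A,\varphi)$ exists, is continuous with respect to the supremum norm $\|\cdot\|_\infty$.
   Context: A ceiling function is a measurable $\varphi:X\to\mathbb{R}$ with $\inf\varphi>0$. $S_n\varphi=\sum_{k=0}^{n-1}\varphi\circ\theta^k$, $N_t^\varphi(x)=\min\{n\in\mathbb{N}_0:S_n\varphi(x)>t\}$. Special flow over $\theta$ under $\varphi$: $\overline{X}_\varphi=\{(x,s):0\le s<\varphi(x)\}$, $\overline{\mu}_\varphi$ the restriction of $\mu\otimes$Lebesgue, $\Phi^\varphi_t(x,s)=(x,s+t)$ if $t<\varphi(x)-s$, else $(\theta^{N-1}x,s+t-S_{N-1}\varphi(x))$ with $N=N^\varphi_{s+t}(x)$. A hole $A\subset X$ is a measurable set with $\bigcup_{n\ge0}\theta^{-n}(A)=X$ a.e. The escape rate $\rho(A,\varphi)$ is $\lim_{t\to\infty}-\frac1t\log\overline{\mu}_\varphi(\{(x,s):\forall\tau\in[0,t]:\Phi^\varphi_\tau(x,s)\notin A\times\mathbb{R}\})$ when the limit exists. *)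

theory Defs
  imports "HOL-Probability.Probability"
begin

definition measure_preserving_endo :: "'a measure \<Rightarrow> ('a \<Rightarrow> 'a) \<Rightarrow> bool" where
  "measure_preserving_endo M \<theta> \<longleftrightarrow> \<theta> \<in> measurable M M \<and> distr M M \<theta> = M"

definition birkhoff_sum :: "('a \<Rightarrow> 'a) \<Rightarrow> ('a \<Rightarrow> real) \<Rightarrow> nat \<Rightarrow> 'a \<Rightarrow> real" where
  "birkhoff_sum \<theta> \<phi> n x = (\<Sum>k<n. \<phi> ((\<theta> ^^ k) x))"

definition lap_number :: "('a \<Rightarrow> 'a) \<Rightarrow> ('a \<Rightarrow> real) \<Rightarrow> real \<Rightarrow> 'a \<Rightarrow> nat" where
  "lap_number \<theta> \<phi> t x = (LEAST n. birkhoff_sum \<theta> \<phi> n x > t)"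

definition special_flow :: "('a \<Rightarrow> 'a) \<Rightarrow> ('a \<Rightarrow> real) \<Rightarrow> real \<Rightarrow> 'a \<times> real \<Rightarrow> 'a \<times> real" where
  "special_flow \<theta> \<phi> t p = (case p of (x, s) \<Rightarrow>
     if t < \<phi> x - s then (x, s + t)
     else (let N = lap_number \<theta> \<phi> (s + t) x in
           ((\<theta> ^^ (N - 1)) x, s + t - birkhoff_sum \<theta> \<phi> (N - 1) x)))"

definition ceiling_function :: "'a measure \<Rightarrow> ('a \<Rightarrow> real) \<Rightarrow> bool" where
  "ceiling_function M \<phi> \<longleftrightarrow> \<phi> \<in> borel_measurable M \<and> (\<exists>c>0. \<forall>x\<in>space M. c \<le> \<phi> x)"

definition bounded_fun :: "'a measure \<Rightarrow> ('a \<Rightarrow> real) \<Rightarrow> bool" where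
  "bounded_fun M \<phi> \<longleftrightarrow> (\<exists>C. \<forall>x\<in>space M. \<bar>\<phi> x\<bar> \<le> C)"

definition hole :: "'a measure \<Rightarrow> ('a \<Rightarrow> 'a) \<Rightarrow> 'a set \<Rightarrow> bool" where
  "hole M \<theta> A \<longleftrightarrow> A \<in> sets M \<and> (AE x in M. \<exists>n. (\<theta> ^^ n) x \<in> A)"

definition surviving_set :: "'a measure \<Rightarrow> ('a \<Rightarrow> 'a) \<Rightarrow> 'a set \<Rightarrow> ('a \<Rightarrow> real) \<Rightarrow> real \<Rightarrow> ('a \<times> real) set" where
  "surviving_set M \<theta> A \<phi> t =
     {(x, s). x \<in> space M \<and> 0 \<le> s \<and> s < \<phi> x \<and>
              (\<forall>\<tau>\<in>{0..t}. fst (special_flow \<theta> \<phi> \<tau> (x, s)) \<notin> A)}"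

text \<open>The escape rate rho(A,phi) exists and equals r; the measure is mu (x) Lebesgue
  restricted to the suspension space (the surviving set lies inside it).\<close>
definition has_escape_rate :: "'a measure \<Rightarrow> ('a \<Rightarrow> 'a) \<Rightarrow> 'a set \<Rightarrow> ('a \<Rightarrow> real) \<Rightarrow> real \<Rightarrow> bool" where
  "has_escape_rate M \<theta> A \<phi> r \<longleftrightarrow>
     ((\<lambda>t. - (1 / t) * ln (measure (M \<Otimes>\<^sub>M lborel) (surviving_set M \<theta> A \<phi> t))) \<longlongrightarrow> r) at_top"

end

theory Submission
  imports Defs
begin


definition Gset :: "'a measure \<Rightarrow> ('a \<Rightarrow> 'a) \<Rightarrow> 'a set \<Rightarrow> ('a \<Rightarrow> real) \<Rightarrow> real \<Rightarrow> 'a set" where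
  "Gset M \<theta> A \<phi> u = {x\<in>space M. \<forall>n. (\<theta>^^n) x \<in> A \<longrightarrow> u < birkhoff_sum \<theta> \<phi> n x}"

definition Surv :: "'a measure \<Rightarrow> ('a \<Rightarrow> 'a) \<Rightarrow> 'a set \<Rightarrow> ('a \<Rightarrow> real) \<Rightarrow> real \<Rightarrow> ('a \<times> real) set" where
  "Surv M \<theta> A \<phi> t = {p\<in>space (M \<Otimes>\<^sub>M lborel). 0 \<le> snd p \<and> snd p < \<phi> (fst p) \<and>
      (\<forall>n. (\<theta>^^n) (fst p) \<in> A \<longrightarrow> snd p + t < birkhoff_sum \<theta> \<phi> n (fst p))}"

lemma bs_Suc: "birkhoff_sum \<theta> \<phi> (Suc n) x = birkhoff_sum \<theta> \<phi> n x + \<phi> ((\<theta>^^n) x)"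
  by (simp add: birkhoff_sum_def)

lemma bs_0[simp]: "birkhoff_sum \<theta> \<phi> 0 x = 0"
  by (simp add: birkhoff_sum_def)

lemma bs_1: "birkhoff_sum \<theta> \<phi> 1 x = \<phi> x"
  by (simp add: birkhoff_sum_def)

lemma bs_mono:
  assumes "\<And>k. 0 < \<phi> ((\<theta>^^k) x)" "m \<le> n"
  shows "birkhoff_sum \<theta> \<phi> m x \<le> birkhoff_sum \<theta> \<phi> n x"
  unfolding birkhoff_sum_def
  by (rule sum_mono2) (use assms in \<open>auto intro: less_imp_le\<close>)

lemma bs_lower:
  assumes "\<And>k. c \<le> \<phi> ((\<theta>^^k) x)"
  shows "real n * c \<le> birkhoff_sum \<theta> \<phi> n x"
proof (induction n)
  case (Suc n)
  then show ?case using assms[of n] by (simp add: bs_Suc algebra_simps)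
qed simp

lemma lap_eq:
  assumes "\<And>k. 0 < \<phi> ((\<theta>^^k) x)" "birkhoff_sum \<theta> \<phi> k x \<le> u" "u < birkhoff_sum \<theta> \<phi> (Suc k) x"
  shows "lap_number \<theta> \<phi> u x = Suc k"
  unfolding lap_number_def
proof (rule Least_equality)
  show "u < birkhoff_sum \<theta> \<phi> (Suc k) x" by fact
  fix m assume um: "u < birkhoff_sum \<theta> \<phi> m x"
  show "Suc k \<le> m"
  proof (rule ccontr)
    assume "\<not> Suc k \<le> m"
    then have "m \<le> k" by simp
    then have "birkhoff_sum \<theta> \<phi> m x \<le> birkhoff_sum \<theta> \<phi> k x" by (rule bs_mono[where \<theta>=\<theta> and \<phi>=\<phi> and x=x, OF assms(1)])
    then show False using assms(2) um by simp
  qed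
qed

lemma lap_small:
  assumes "u < \<phi> x"
  shows "lap_number \<theta> \<phi> u x - 1 = 0"
proof -
  have "lap_number \<theta> \<phi> u x \<le> 1"
    unfolding lap_number_def by (rule Least_le) (use assms in \<open>simp add: birkhoff_sum_def\<close>)
  then show ?thesis by simp
qed

lemma fst_flow:
  "fst (special_flow \<theta> \<phi> \<tau> (x, s)) = (\<theta>^^(lap_number \<theta> \<phi> (s+\<tau>) x - 1)) x"
proof (cases "\<tau> < \<phi> x - s")
  case True
  then have "s + \<tau> < \<phi> x" by simp
  then show ?thesis using True lap_small[of "s+\<tau>" \<phi> x \<theta>] by (simp add: special_flow_def)
next
  case False
  then show ?thesis by (simp add: special_flow_def Let_def)
qed

lemma lap_le:
  assumes "\<And>k. c \<le> \<phi> ((\<theta>^^k) x)" "c > 0" "0 \<le> u"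
  shows "birkhoff_sum \<theta> \<phi> (lap_number \<theta> \<phi> u x - 1) x \<le> u"
proof -
  define n where "n = Suc (nat \<lceil>u / c\<rceil>)"
  have "u / c \<le> real (nat \<lceil>u / c\<rceil>)" by linarith
  then have "u / c < real n" unfolding n_def by simp
  then have "u < real n * c" using assms(2) by (simp add: field_simps)
  also have "\<dots> \<le> birkhoff_sum \<theta> \<phi> n x" by (rule bs_lower) (rule assms(1))
  finally have ex: "\<exists>n. u < birkhoff_sum \<theta> \<phi> n x" by blast
  define N where "N = lap_number \<theta> \<phi> u x"
  have "u < birkhoff_sum \<theta> \<phi> N x" unfolding N_def lap_number_def by (rule LeastI_ex[OF ex])
  then have "N \<noteq> 0" using assms(3) by (cases N) auto
  then have "N - 1 < N" by simp
  then have "\<not> u < birkhoff_sum \<theta> \<phi> (N-1) x" unfolding N_def lap_number_def by (rule not_less_Least)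
  then show ?thesis unfolding N_def by simp
qed

lemma funpow_space:
  assumes "\<theta> \<in> measurable M M" "x \<in> space M"
  shows "(\<theta>^^n) x \<in> space M"
  using measurable_space[OF measurable_compose_n[OF assms(1)] assms(2)] .



lemma surv_pt:
  assumes orb: "\<And>k. c \<le> \<phi> ((\<theta>^^k) x)" and c: "c > 0" and t: "0 \<le> t"
    and s: "0 \<le> s" "s < \<phi> x"
  shows "(\<forall>\<tau>\<in>{0..t}. fst (special_flow \<theta> \<phi> \<tau> (x, s)) \<notin> A) \<longleftrightarrow>
         (\<forall>n. (\<theta>^^n) x \<in> A \<longrightarrow> s + t < birkhoff_sum \<theta> \<phi> n x)"
proof
  have pos: "\<And>k. 0 < \<phi> ((\<theta>^^k) x)" using orb c by (meson less_le_trans)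
  assume H: "\<forall>\<tau>\<in>{0..t}. fst (special_flow \<theta> \<phi> \<tau> (x, s)) \<notin> A"
  show "\<forall>n. (\<theta>^^n) x \<in> A \<longrightarrow> s + t < birkhoff_sum \<theta> \<phi> n x"
  proof (intro allI impI, rule ccontr)
    fix n assume nA: "(\<theta>^^n) x \<in> A" and "\<not> s + t < birkhoff_sum \<theta> \<phi> n x"
    then have le: "birkhoff_sum \<theta> \<phi> n x \<le> s + t" by simp
    define u where "u = max s (birkhoff_sum \<theta> \<phi> n x)"
    have "birkhoff_sum \<theta> \<phi> n x \<le> u" unfolding u_def by simp
    moreover have "u < birkhoff_sum \<theta> \<phi> (Suc n) x"
    proof (cases n)
      case 0
      then show ?thesis using s pos[of 0] by (simp add: u_def bs_Suc)
    next
      case (Suc m)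
      have "birkhoff_sum \<theta> \<phi> 1 x \<le> birkhoff_sum \<theta> \<phi> n x"
        using bs_mono[where \<phi>=\<phi> and \<theta>=\<theta> and x=x, OF pos] Suc by simp
      then have "s < birkhoff_sum \<theta> \<phi> n x" using s by (simp add: birkhoff_sum_def)
      then show ?thesis using pos[of n] by (simp add: u_def bs_Suc)
    qed
    ultimately have "lap_number \<theta> \<phi> u x = Suc n" by (rule lap_eq[where \<theta>=\<theta> and \<phi>=\<phi> and x=x, OF pos])
    moreover have "u = s + (u - s)" by simp
    ultimately have "fst (special_flow \<theta> \<phi> (u - s) (x, s)) = (\<theta>^^n) x"
      using fst_flow[of \<theta> \<phi> "u - s" x s] by simp
    moreover have "u - s \<in> {0..t}" using le t unfolding u_def by auto
    ultimately show False using H nA by metis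
  qed
next
  have pos: "\<And>k. 0 < \<phi> ((\<theta>^^k) x)" using orb c by (meson less_le_trans)
  assume H: "\<forall>n. (\<theta>^^n) x \<in> A \<longrightarrow> s + t < birkhoff_sum \<theta> \<phi> n x"
  show "\<forall>\<tau>\<in>{0..t}. fst (special_flow \<theta> \<phi> \<tau> (x, s)) \<notin> A"
  proof
    fix \<tau> assume "\<tau> \<in> {0..t}"
    then have tau: "0 \<le> \<tau>" "\<tau> \<le> t" by auto
    define k where "k = lap_number \<theta> \<phi> (s + \<tau>) x - 1"
    have "birkhoff_sum \<theta> \<phi> k x \<le> s + \<tau>" unfolding k_def
      by (rule lap_le[where \<theta>=\<theta> and \<phi>=\<phi> and x=x, OF orb c]) (use s tau in simp)
    then have "\<not> s + t < birkhoff_sum \<theta> \<phi> k x" using tau by simp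
    then have "(\<theta>^^k) x \<notin> A" using H by blast
    then show "fst (special_flow \<theta> \<phi> \<tau> (x, s)) \<notin> A" by (simp add: fst_flow k_def)
  qed
qed

lemma surv_eq:
  assumes th: "\<theta> \<in> measurable M M" and c: "c > 0" and lb: "\<forall>y\<in>space M. c \<le> \<phi> y" and t: "0 \<le> t"
  shows "surviving_set M \<theta> A \<phi> t = Surv M \<theta> A \<phi> t"
proof -
  have orb: "\<And>x k. x \<in> space M \<Longrightarrow> c \<le> \<phi> ((\<theta>^^k) x)" using lb funpow_space[OF th] by blast
  have key: "(\<forall>\<tau>\<in>{0..t}. fst (special_flow \<theta> \<phi> \<tau> (x, s)) \<notin> A) \<longleftrightarrow>
         (\<forall>n. (\<theta>^^n) x \<in> A \<longrightarrow> s + t < birkhoff_sum \<theta> \<phi> n x)"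
    if "x \<in> space M" "0 \<le> s" "s < \<phi> x" for x s
    using surv_pt[OF orb[OF that(1)] c t that(2,3)] .
  show ?thesis
  proof (intro set_eqI)
    fix p :: "'a \<times> real"
    obtain x s where p: "p = (x,s)" by force
    show "p \<in> surviving_set M \<theta> A \<phi> t \<longleftrightarrow> p \<in> Surv M \<theta> A \<phi> t"
      unfolding p surviving_set_def Surv_def space_pair_measure using key[of x s] by auto
  qed
qed

lemma Surv_sets:
  assumes th: "\<theta> \<in> measurable M M" and A: "A \<in> sets M" and phi: "\<phi> \<in> borel_measurable M"
  shows "Surv M \<theta> A \<phi> t \<in> sets (M \<Otimes>\<^sub>M lborel)"
proof -
  have [measurable]: "\<And>n. \<theta>^^n \<in> M \<rightarrow>\<^sub>M M" using th by (rule measurable_compose_n)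
  show ?thesis unfolding Surv_def birkhoff_sum_def using A phi by measurable
qed

lemma Gset_sets:
  assumes th: "\<theta> \<in> measurable M M" and A: "A \<in> sets M" and phi: "\<phi> \<in> borel_measurable M"
  shows "Gset M \<theta> A \<phi> u \<in> sets M"
proof -
  have [measurable]: "\<And>n. \<theta>^^n \<in> M \<rightarrow>\<^sub>M M" using th by (rule measurable_compose_n)
  show ?thesis unfolding Gset_def birkhoff_sum_def using A phi by measurable
qed



lemma prod_meas:
  assumes P: "prob_space M" and X: "X \<in> sets M" and C: "0 \<le> C"
  shows "X \<times> {0..<C} \<in> fmeasurable (M \<Otimes>\<^sub>M lborel)"
    and "measure (M \<Otimes>\<^sub>M lborel) (X \<times> {0..<C}) = measure M X * C"
proof -
  interpret prob_space M by fact
  have e: "emeasure (M \<Otimes>\<^sub>M lborel) (X \<times> {0..<C}) = ennreal (measure M X * C)"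
    using lborel.emeasure_pair_measure_Times[OF X, of "{0..<C}"] C
    by (simp add: emeasure_eq_measure ennreal_mult)
  have s: "X \<times> {0..<C} \<in> sets (M \<Otimes>\<^sub>M lborel)" using X by simp
  show "X \<times> {0..<C} \<in> fmeasurable (M \<Otimes>\<^sub>M lborel)"
    using s e by (intro fmeasurableI) auto
  show "measure (M \<Otimes>\<^sub>M lborel) (X \<times> {0..<C}) = measure M X * C"
    using e C by (simp add: measure_def)
qed

lemma m_bounds:
  assumes P: "prob_space M" and th: "\<theta> \<in> measurable M M" and A: "A \<in> sets M"
    and phi: "\<phi> \<in> borel_measurable M" and c: "0 < c" and cC: "c \<le> C"
    and bnd: "\<forall>y\<in>space M. c \<le> \<phi> y \<and> \<phi> y \<le> C" and t: "0 \<le> t"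
  shows "measure M (Gset M \<theta> A \<phi> (t + C)) * c \<le> measure (M \<Otimes>\<^sub>M lborel) (surviving_set M \<theta> A \<phi> t)"
    and "measure (M \<Otimes>\<^sub>M lborel) (surviving_set M \<theta> A \<phi> t) \<le> measure M (Gset M \<theta> A \<phi> t) * C"
proof -
  have eq: "surviving_set M \<theta> A \<phi> t = Surv M \<theta> A \<phi> t"
    using surv_eq[OF th c _ t] bnd by blast
  have SS: "Surv M \<theta> A \<phi> t \<in> sets (M \<Otimes>\<^sub>M lborel)" by (rule Surv_sets[OF th A phi])
  have G1: "Gset M \<theta> A \<phi> t \<in> sets M" by (rule Gset_sets[OF th A phi])
  have G2: "Gset M \<theta> A \<phi> (t + C) \<in> sets M" by (rule Gset_sets[OF th A phi])
  have sub1: "Surv M \<theta> A \<phi> t \<subseteq> Gset M \<theta> A \<phi> t \<times> {0..<C}"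
  proof (rule subsetI)
    fix p assume H: "p \<in> Surv M \<theta> A \<phi> t"
    obtain x s where p: "p = (x, s)" by force
    have x: "x \<in> space M" and s: "0 \<le> s" "s < \<phi> x"
      and H2: "\<forall>n. (\<theta>^^n) x \<in> A \<longrightarrow> s + t < birkhoff_sum \<theta> \<phi> n x"
      using H unfolding p Surv_def space_pair_measure by auto
    have "\<phi> x \<le> C" using bnd x by blast
    moreover have "\<forall>n. (\<theta>^^n) x \<in> A \<longrightarrow> t < birkhoff_sum \<theta> \<phi> n x"
      using H2 s(1) by force
    ultimately show "p \<in> Gset M \<theta> A \<phi> t \<times> {0..<C}"
      unfolding p Gset_def using x s by simp
  qed
  have sub2: "Gset M \<theta> A \<phi> (t + C) \<times> {0..<c} \<subseteq> Surv M \<theta> A \<phi> t"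
  proof (rule subsetI)
    fix p assume H: "p \<in> Gset M \<theta> A \<phi> (t + C) \<times> {0..<c}"
    obtain x s where p: "p = (x, s)" by force
    have x: "x \<in> space M" and s: "0 \<le> s" "s < c"
      and H2: "\<forall>n. (\<theta>^^n) x \<in> A \<longrightarrow> t + C < birkhoff_sum \<theta> \<phi> n x"
      using H unfolding p Gset_def by auto
    have "c \<le> \<phi> x" using bnd x by blast
    moreover have "\<forall>n. (\<theta>^^n) x \<in> A \<longrightarrow> s + t < birkhoff_sum \<theta> \<phi> n x"
      using H2 s cC by force
    ultimately show "p \<in> Surv M \<theta> A \<phi> t"
      unfolding p Surv_def space_pair_measure using x s by simp
  qed
  have F1: "Gset M \<theta> A \<phi> t \<times> {0..<C} \<in> fmeasurable (M \<Otimes>\<^sub>M lborel)"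
    using prod_meas(1)[OF P G1] c cC by simp
  have FS: "Surv M \<theta> A \<phi> t \<in> fmeasurable (M \<Otimes>\<^sub>M lborel)"
    using fmeasurableI2[OF F1 sub1 SS] .
  show "measure M (Gset M \<theta> A \<phi> (t + C)) * c \<le> measure (M \<Otimes>\<^sub>M lborel) (surviving_set M \<theta> A \<phi> t)"
    using measure_mono_fmeasurable[OF sub2 _ FS] prod_meas(2)[OF P G2, of c] G2 c eq by simp
  show "measure (M \<Otimes>\<^sub>M lborel) (surviving_set M \<theta> A \<phi> t) \<le> measure M (Gset M \<theta> A \<phi> t) * C"
    using measure_mono_fmeasurable[OF sub1 SS F1] prod_meas(2)[OF P G1, of C] c cC eq by simp
qed

lemma Gset_cmp:
  assumes th: "\<theta> \<in> measurable M M" and l: "0 < l" and le: "\<forall>x\<in>space M. \<phi>1 x \<le> l * \<phi>2 x"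
  shows "Gset M \<theta> A \<phi>1 u \<subseteq> Gset M \<theta> A \<phi>2 (u / l)"
proof
  fix x assume x: "x \<in> Gset M \<theta> A \<phi>1 u"
  then have xs: "x \<in> space M" by (simp add: Gset_def)
  have le2: "birkhoff_sum \<theta> \<phi>1 n x \<le> l * birkhoff_sum \<theta> \<phi>2 n x" for n
  proof -
    have "\<And>k. \<phi>1 ((\<theta>^^k) x) \<le> l * \<phi>2 ((\<theta>^^k) x)"
      using le funpow_space[OF th xs] by blast
    then show ?thesis unfolding birkhoff_sum_def sum_distrib_left by (rule sum_mono)
  qed
  show "x \<in> Gset M \<theta> A \<phi>2 (u / l)"
    unfolding Gset_def
  proof (intro CollectI conjI allI impI)
    show "x \<in> space M" by fact
    fix n assume "(\<theta>^^n) x \<in> A"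
    then have "u < birkhoff_sum \<theta> \<phi>1 n x" using x unfolding Gset_def by blast
    then have "u < l * birkhoff_sum \<theta> \<phi>2 n x" using le2[of n] by linarith
    then show "u / l < birkhoff_sum \<theta> \<phi>2 n x" using l by (simp add: divide_less_eq mult.commute)
  qed
qed

lemma Gset_anti: "u \<le> v \<Longrightarrow> Gset M \<theta> A \<phi> v \<subseteq> Gset M \<theta> A \<phi> u"
  unfolding Gset_def by auto



lemma const_div_0: "((\<lambda>t::real. b / t) \<longlongrightarrow> 0) at_top"
  by (rule tendsto_divide_0[OF tendsto_const filterlim_at_top_imp_at_infinity[OF filterlim_ident]])

lemma rate_cmp:
  fixes f g :: "real \<Rightarrow> real"
  assumes f: "((\<lambda>t. - (1/t) * ln (f t)) \<longlongrightarrow> r) at_top"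
    and g: "((\<lambda>t. - (1/t) * ln (g t)) \<longlongrightarrow> r') at_top"
    and a: "0 < a" and K: "0 < K"
    and ev: "eventually (\<lambda>t. 0 < f t \<and> f t \<le> K * g (a*t+b)) at_top"
    and gpos: "eventually (\<lambda>s. 0 < g s) at_top"
  shows "a * r' \<le> r"
proof -
  have lim_h0: "filterlim (\<lambda>t. b + a*t) at_top at_top"
    by (rule filterlim_tendsto_add_at_top[OF tendsto_const filterlim_tendsto_pos_mult_at_top[OF tendsto_const a filterlim_ident]])
  have lim_h: "filterlim (\<lambda>t. a*t+b) at_top at_top"
    using lim_h0 by (simp add: add.commute)
  have g2: "((\<lambda>t. - (1/(a*t+b)) * ln (g (a*t+b))) \<longlongrightarrow> r') at_top"
    using filterlim_compose[OF g lim_h] .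
  have q0: "((\<lambda>t. a + b/t) \<longlongrightarrow> a + 0) at_top"
    by (rule tendsto_add[OF tendsto_const const_div_0])
  have q: "((\<lambda>t. (a*t+b)/t) \<longlongrightarrow> a) at_top"
  proof (rule Lim_transform_eventually[OF q0[simplified]])
    show "eventually (\<lambda>t. a + b/t = (a*t+b)/t) at_top"
      using eventually_gt_at_top[of 0] by eventually_elim (simp add: field_simps)
  qed
  have k: "((\<lambda>t. - (1/t) * ln K) \<longlongrightarrow> 0) at_top"
    using const_div_0[of "- ln K"] by simp
  have lim: "((\<lambda>t. - (1/t) * ln K + (- (1/(a*t+b)) * ln (g (a*t+b))) * ((a*t+b)/t)) \<longlongrightarrow> 0 + r' * a) at_top"
    by (intro tendsto_add tendsto_mult k g2 q)
  have ev2: "eventually (\<lambda>t. 0 < g (a*t+b)) at_top"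
    by (rule eventually_compose_filterlim[OF gpos lim_h])
  have ev3: "eventually (\<lambda>t. 0 < a*t+b) at_top"
    by (rule eventually_compose_filterlim[OF eventually_gt_at_top[of 0] lim_h])
  have "eventually (\<lambda>t. - (1/t) * ln K + (- (1/(a*t+b)) * ln (g (a*t+b))) * ((a*t+b)/t)
      \<le> - (1/t) * ln (f t)) at_top"
    using ev ev2 ev3 eventually_gt_at_top[of 0]
  proof eventually_elim
    case (elim t)
    have "ln (f t) \<le> ln (K * g (a*t+b))" using elim by simp
    also have "\<dots> = ln K + ln (g (a*t+b))" using K elim by (simp add: ln_mult)
    finally have L: "ln (f t) \<le> ln K + ln (g (a*t+b))" .
    have "- (1/t) * ln K + (- (1/(a*t+b)) * ln (g (a*t+b))) * ((a*t+b)/t)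
        = - (ln K + ln (g (a*t+b))) / t"
    proof -
      have gen: "(- (1/s) * L) * (s/t) = - L / t" if "s \<noteq> 0" for s L :: real
        using that by (simp add: field_simps)
      show ?thesis using gen[of "a*t+b" "ln (g (a*t+b))"] elim by (simp add: diff_divide_distrib add_divide_distrib)
    qed
    also have "\<dots> \<le> - ln (f t) / t"
    proof -
      have "- (ln K + ln (g (a*t+b))) \<le> - ln (f t)" using L by simp
      then show ?thesis using elim by (intro divide_right_mono) auto
    qed
    finally show ?case by simp
  qed
  from tendsto_le[OF _ f lim this] show ?thesis by (simp add: mult.commute)
qed

lemma rate_zero:
  fixes f :: "real \<Rightarrow> real"
  assumes f: "((\<lambda>t. - (1/t) * ln (f t)) \<longlongrightarrow> r) at_top"
    and ev: "eventually (\<lambda>t. f t = 0) at_top"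
  shows "r = 0"
proof -
  have "((\<lambda>t. - (1/t) * ln (f t)) \<longlongrightarrow> 0) at_top"
    by (rule Lim_transform_eventually[OF tendsto_const]) (use ev in \<open>eventually_elim, simp\<close>)
  from tendsto_unique[OF _ f this] show ?thesis by simp
qed



lemma final_arith:
  fixes r r' \<eta> \<epsilon> :: real
  assumes e: "0 < \<eta>" "\<eta> \<le> 1/2" and i1: "r / (1 + \<eta>) \<le> r'" and i2: "r' * (1 - \<eta>) \<le> r"
    and eps: "2 * \<eta> * (\<bar>r\<bar> + 1) \<le> \<epsilon>"
  shows "\<bar>r' - r\<bar> < \<epsilon>"
proof -
  have p1: "0 < 1 + \<eta>" "0 < 1 - \<eta>" using e by auto
  have "r - r / (1 + \<eta>) = r * \<eta> / (1 + \<eta>)" using p1 by (simp add: field_simps)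
  also have "\<dots> \<le> \<bar>r\<bar> * \<eta> / (1 + \<eta>)" using p1 e
    by (intro divide_right_mono mult_right_mono) auto
  also have "\<dots> \<le> \<bar>r\<bar> * \<eta>"
  proof -
    have "\<bar>r\<bar> * \<eta> * 1 \<le> \<bar>r\<bar> * \<eta> * (1 + \<eta>)" using e by (intro mult_left_mono) auto
    then show ?thesis using p1 by (simp add: divide_le_eq)
  qed
  finally have h1: "r - r' \<le> \<bar>r\<bar> * \<eta>" using i1 by linarith
  have a1: "r' \<le> r / (1 - \<eta>)" using i2 p1 by (simp add: le_divide_eq)
  have "r' - r \<le> r / (1 - \<eta>) - r" using a1 by simp
  also have "\<dots> = r * \<eta> / (1 - \<eta>)" using p1 by (simp add: field_simps)
  also have "\<dots> \<le> \<bar>r\<bar> * \<eta> / (1 - \<eta>)" using p1 e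
    by (intro divide_right_mono mult_right_mono) auto
  also have "\<dots> \<le> 2 * \<eta> * \<bar>r\<bar>"
  proof -
    have "\<bar>r\<bar> * \<eta> \<le> 2 * \<eta> * \<bar>r\<bar> * (1 - \<eta>)"
    proof -
      have "1 \<le> 2 * (1 - \<eta>)" using e by simp
      then have "\<bar>r\<bar> * \<eta> * 1 \<le> \<bar>r\<bar> * \<eta> * (2 * (1 - \<eta>))" using e
        by (intro mult_left_mono) auto
      then show ?thesis by (simp add: algebra_simps)
    qed
    then show ?thesis using p1 by (simp add: divide_le_eq)
  qed
  finally have h2: "r' - r \<le> 2 * \<eta> * \<bar>r\<bar>" .
  have "\<bar>r\<bar> * \<eta> \<le> 2 * \<eta> * \<bar>r\<bar>" using e by (simp add: mult_right_mono)
  moreover have "2 * \<eta> * \<bar>r\<bar> < \<epsilon>" using eps e by (simp add: algebra_simps)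
  ultimately show ?thesis using h1 h2 by linarith
qed



lemma cmp_main:
  assumes P: "prob_space M" and th: "\<theta> \<in> measurable M M" and A: "A \<in> sets M"
    and m1: "\<phi>1 \<in> borel_measurable M" and m2: "\<phi>2 \<in> borel_measurable M"
    and c1: "0 < c1" "c1 \<le> C1" and b1: "\<forall>y\<in>space M. c1 \<le> \<phi>1 y \<and> \<phi>1 y \<le> C1"
    and c2: "0 < c2" "c2 \<le> C2" and b2: "\<forall>y\<in>space M. c2 \<le> \<phi>2 y \<and> \<phi>2 y \<le> C2"
    and l: "0 < l" and le: "\<forall>x\<in>space M. \<phi>1 x \<le> l * \<phi>2 x"
    and Gpos: "\<forall>u. 0 < measure M (Gset M \<theta> A \<phi>1 u)"
    and r1: "has_escape_rate M \<theta> A \<phi>1 r1" and r2: "has_escape_rate M \<theta> A \<phi>2 r2"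
  shows "r2 / l \<le> r1"
proof -
  interpret prob_space M by fact
  let ?m1 = "\<lambda>t. measure (M \<Otimes>\<^sub>M lborel) (surviving_set M \<theta> A \<phi>1 t)"
  let ?m2 = "\<lambda>t. measure (M \<Otimes>\<^sub>M lborel) (surviving_set M \<theta> A \<phi>2 t)"
  let ?G1 = "\<lambda>u. measure M (Gset M \<theta> A \<phi>1 u)"
  let ?G2 = "\<lambda>u. measure M (Gset M \<theta> A \<phi>2 u)"
  have G12: "?G1 u \<le> ?G2 (u / l)" for u
    by (rule finite_measure_mono[OF Gset_cmp[OF th l le] Gset_sets[OF th A m2]])
  have G2pos: "0 < ?G2 v" for v
  proof -
    have "l * v / l = v" using l by simp
    then show ?thesis using G12[of "l * v"] Gpos[rule_format, of "l * v"] by simp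
  qed
  have "(1 / l) * r2 \<le> r1"
  proof (rule rate_cmp[where K = "C1 / c2" and b = "- C2"])
    show "((\<lambda>t. - (1/t) * ln (?m1 t)) \<longlongrightarrow> r1) at_top" using r1 by (simp add: has_escape_rate_def)
    show "((\<lambda>t. - (1/t) * ln (?m2 t)) \<longlongrightarrow> r2) at_top" using r2 by (simp add: has_escape_rate_def)
    show "0 < 1 / l" using l by simp
    show "0 < C1 / c2" using c1 c2 by simp
    show "eventually (\<lambda>s. 0 < ?m2 s) at_top"
      using eventually_ge_at_top[of 0]
    proof eventually_elim
      case (elim s)
      have "0 < ?G2 (s + C2) * c2" using G2pos c2 by simp
      also have "\<dots> \<le> ?m2 s" by (rule m_bounds(1)[OF P th A m2 c2 b2 elim])
      finally show ?case .
    qed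
    show "eventually (\<lambda>t. 0 < ?m1 t \<and> ?m1 t \<le> C1 / c2 * ?m2 (1 / l * t + - C2)) at_top"
      using eventually_ge_at_top[of "l * C2"]
    proof eventually_elim
      case (elim t)
      have "0 < l * C2" using l c2 by simp
      then have t0: "0 \<le> t" using elim by linarith
      have s0: "0 \<le> 1 / l * t + - C2" using elim l by (simp add: field_simps)
      have "0 < ?G1 (t + C1) * c1" using Gpos c1 by simp
      also have "\<dots> \<le> ?m1 t" by (rule m_bounds(1)[OF P th A m1 c1 b1 t0])
      finally have pos: "0 < ?m1 t" .
      have "?m1 t \<le> ?G1 t * C1" by (rule m_bounds(2)[OF P th A m1 c1 b1 t0])
      also have "\<dots> \<le> ?G2 (t / l) * C1" using G12[of t] c1 by (intro mult_right_mono) auto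
      also have "\<dots> \<le> (?m2 (1 / l * t + - C2) / c2) * C1"
      proof -
        have "?G2 (1 / l * t + - C2 + C2) * c2 \<le> ?m2 (1 / l * t + - C2)"
          by (rule m_bounds(1)[OF P th A m2 c2 b2 s0])
        then have "?G2 (t / l) \<le> ?m2 (1 / l * t + - C2) / c2" using c2 by (simp add: le_divide_eq)
        then show ?thesis using c1 by (intro mult_right_mono) auto
      qed
      also have "\<dots> = C1 / c2 * ?m2 (1 / l * t + - C2)" by simp
      finally show ?case using pos by simp
    qed
  qed
  then show ?thesis by simp
qed

lemma zero_case:
  assumes P: "prob_space M" and th: "\<theta> \<in> measurable M M" and A: "A \<in> sets M"
    and m1: "\<phi> \<in> borel_measurable M"
    and c1: "0 < c" "c \<le> C" and b1: "\<forall>y\<in>space M. c \<le> \<phi> y \<and> \<phi> y \<le> C"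
    and G0: "measure M (Gset M \<theta> A \<phi> u0) = 0"
    and r1: "has_escape_rate M \<theta> A \<phi> r"
  shows "r = 0"
proof (rule rate_zero)
  interpret prob_space M by fact
  show "((\<lambda>t. - (1/t) * ln (measure (M \<Otimes>\<^sub>M lborel) (surviving_set M \<theta> A \<phi> t))) \<longlongrightarrow> r) at_top"
    using r1 by (simp add: has_escape_rate_def)
  show "eventually (\<lambda>t. measure (M \<Otimes>\<^sub>M lborel) (surviving_set M \<theta> A \<phi> t) = 0) at_top"
    using eventually_ge_at_top[of "max 0 u0"]
  proof eventually_elim
    case (elim t)
    then have t0: "0 \<le> t" by simp
    have "measure (M \<Otimes>\<^sub>M lborel) (surviving_set M \<theta> A \<phi> t) \<le> measure M (Gset M \<theta> A \<phi> t) * C"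
      by (rule m_bounds(2)[OF P th A m1 c1 b1 t0])
    also have "\<dots> \<le> measure M (Gset M \<theta> A \<phi> u0) * C"
      using c1 elim by (intro mult_right_mono finite_measure_mono[OF Gset_anti Gset_sets[OF th A m1]]) auto
    finally have "measure (M \<Otimes>\<^sub>M lborel) (surviving_set M \<theta> A \<phi> t) \<le> 0" using G0 by simp
    then show ?case using measure_nonneg[of "M \<Otimes>\<^sub>M lborel"] by (simp add: order_antisym)
  qed
qed



theorem proposition3p12:
  fixes M :: "'a measure" and \<theta> :: "'a \<Rightarrow> 'a" and A :: "'a set"
  assumes "prob_space M"
    and "measure_preserving_endo M \<theta>"
    and "hole M \<theta> A"
    and "ceiling_function M \<phi>" and "bounded_fun M \<phi>" and "has_escape_rate M \<theta> A \<phi> r"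
  shows "\<forall>\<epsilon>>0. \<exists>\<delta>>0. \<forall>\<psi> r'. ceiling_function M \<psi> \<and> bounded_fun M \<psi> \<and>
           has_escape_rate M \<theta> A \<psi> r' \<and> (\<forall>x\<in>space M. \<bar>\<psi> x - \<phi> x\<bar> \<le> \<delta>)
           \<longrightarrow> \<bar>r' - r\<bar> < \<epsilon>"
proof -
  note P = assms(1)
  interpret prob_space M by fact
  have th: "\<theta> \<in> measurable M M" using assms(2) by (simp add: measure_preserving_endo_def)
  have A: "A \<in> sets M" using assms(3) by (simp add: hole_def)
  have mphi: "\<phi> \<in> borel_measurable M" using assms(4) by (simp add: ceiling_function_def)
  obtain c0 where c0: "0 < c0" "\<forall>x\<in>space M. c0 \<le> \<phi> x"
    using assms(4) by (auto simp: ceiling_function_def)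
  obtain C00 where C00: "\<forall>x\<in>space M. \<bar>\<phi> x\<bar> \<le> C00"
    using assms(5) by (auto simp: bounded_fun_def)
  define C0 where "C0 = max C00 c0"
  have cC0: "c0 \<le> C0" unfolding C0_def by simp
  have b0: "\<forall>y\<in>space M. c0 \<le> \<phi> y \<and> \<phi> y \<le> C0"
    using c0 C00 unfolding C0_def by (smt (verit))
  show ?thesis
  proof (intro allI impI)
    fix \<epsilon> :: real assume eps: "0 < \<epsilon>"
    define \<delta> where "\<delta> = min (c0 / 2) (\<epsilon> * c0 / (2 * (\<bar>r\<bar> + 1)))"
    have "0 < \<epsilon> * c0 / (2 * (\<bar>r\<bar> + 1))" using eps c0 by (simp add: add_pos_nonneg)
    then have dpos: "0 < \<delta>" using c0 unfolding \<delta>_def by simp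
    define \<eta> where "\<eta> = \<delta> / c0"
    have eta_pos: "0 < \<eta>" using dpos c0 unfolding \<eta>_def by simp
    have "\<delta> \<le> c0 / 2" unfolding \<delta>_def by (rule min.cobounded1)
    then have eta_le: "\<eta> \<le> 1/2" using c0 unfolding \<eta>_def by (simp add: divide_le_eq)
    have d_eq: "\<delta> = \<eta> * c0" using c0 unfolding \<eta>_def by simp
    have eta_eps: "2 * \<eta> * (\<bar>r\<bar> + 1) \<le> \<epsilon>"
    proof -
      have "\<delta> \<le> \<epsilon> * c0 / (2 * (\<bar>r\<bar> + 1))" unfolding \<delta>_def by (rule min.cobounded2)
      then have "\<eta> \<le> \<epsilon> / (2 * (\<bar>r\<bar> + 1))" using c0 unfolding \<eta>_def
        by (simp add: divide_le_eq field_simps)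
      moreover have pos: "0 < 2 * (\<bar>r\<bar> + 1)" by (simp add: add_nonneg_pos)
      ultimately have "\<eta> * (2 * (\<bar>r\<bar> + 1)) \<le> \<epsilon>" by (simp add: pos_le_divide_eq)
      then show ?thesis by (simp add: algebra_simps)
    qed
    show "\<exists>\<delta>>0. \<forall>\<psi> r'. ceiling_function M \<psi> \<and> bounded_fun M \<psi> \<and>
           has_escape_rate M \<theta> A \<psi> r' \<and> (\<forall>x\<in>space M. \<bar>\<psi> x - \<phi> x\<bar> \<le> \<delta>)
           \<longrightarrow> \<bar>r' - r\<bar> < \<epsilon>"
    proof (intro exI[of _ \<delta>] conjI allI impI dpos)
      fix \<psi> r'
      assume H: "ceiling_function M \<psi> \<and> bounded_fun M \<psi> \<and>
           has_escape_rate M \<theta> A \<psi> r' \<and> (\<forall>x\<in>space M. \<bar>\<psi> x - \<phi> x\<bar> \<le> \<delta>)"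
      have mpsi: "\<psi> \<in> borel_measurable M" using H by (simp add: ceiling_function_def)
      obtain c1 where c1: "0 < c1" "\<forall>x\<in>space M. c1 \<le> \<psi> x"
        using H by (auto simp: ceiling_function_def)
      obtain C11 where C11: "\<forall>x\<in>space M. \<bar>\<psi> x\<bar> \<le> C11"
        using H by (auto simp: bounded_fun_def)
      define C1 where "C1 = max C11 c1"
      have cC1: "c1 \<le> C1" unfolding C1_def by simp
      have b1: "\<forall>y\<in>space M. c1 \<le> \<psi> y \<and> \<psi> y \<le> C1"
        using c1 C11 unfolding C1_def by (smt (verit))
      have rpsi: "has_escape_rate M \<theta> A \<psi> r'" using H by simp
      have close: "\<forall>x\<in>space M. \<bar>\<psi> x - \<phi> x\<bar> \<le> \<delta>" using H by simp
      have l1pos: "0 < 1 + \<eta>" using eta_pos by simp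
      have l2pos: "0 < 1 / (1 - \<eta>)" using eta_le by simp
      have le1: "\<forall>x\<in>space M. \<psi> x \<le> (1 + \<eta>) * \<phi> x"
      proof
        fix x assume x: "x \<in> space M"
        have "\<delta> \<le> \<eta> * \<phi> x" using d_eq c0 x eta_pos by (simp add: mult_left_mono)
        moreover have "\<bar>\<psi> x - \<phi> x\<bar> \<le> \<delta>" using close x by blast
        ultimately show "\<psi> x \<le> (1 + \<eta>) * \<phi> x" by (simp add: algebra_simps abs_le_iff)
      qed
      have le2: "\<forall>x\<in>space M. \<phi> x \<le> 1 / (1 - \<eta>) * \<psi> x"
      proof
        fix x assume x: "x \<in> space M"
        have "\<delta> \<le> \<eta> * \<phi> x" using d_eq c0 x eta_pos by (simp add: mult_left_mono)
        moreover have "\<bar>\<psi> x - \<phi> x\<bar> \<le> \<delta>" using close x by blast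
        ultimately have "(1 - \<eta>) * \<phi> x \<le> \<psi> x" by (simp add: algebra_simps abs_le_iff)
        then show "\<phi> x \<le> 1 / (1 - \<eta>) * \<psi> x" using eta_le by (simp add: le_divide_eq mult.commute)
      qed
      show "\<bar>r' - r\<bar> < \<epsilon>"
      proof (cases "\<forall>u. 0 < measure M (Gset M \<theta> A \<phi> u)")
        case True
        have Gpsi: "\<forall>u. 0 < measure M (Gset M \<theta> A \<psi> u)"
        proof
          fix u
          have "measure M (Gset M \<theta> A \<phi> (1 / (1 - \<eta>) * u)) \<le> measure M (Gset M \<theta> A \<psi> (1 / (1 - \<eta>) * u / (1 / (1 - \<eta>))))"
            by (rule finite_measure_mono[OF Gset_cmp[OF th l2pos le2] Gset_sets[OF th A mpsi]])
          moreover have "1 / (1 - \<eta>) * u / (1 / (1 - \<eta>)) = u" using l2pos by simp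
          ultimately show "0 < measure M (Gset M \<theta> A \<psi> u)" using True by (metis less_le_trans)
        qed
        have i1: "r / (1 + \<eta>) \<le> r'"
          by (rule cmp_main[OF P th A mpsi mphi c1(1) cC1 b1 c0(1) cC0 b0 l1pos le1 Gpsi rpsi assms(6)])
        have "r' / (1 / (1 - \<eta>)) \<le> r"
          by (rule cmp_main[OF P th A mphi mpsi c0(1) cC0 b0 c1(1) cC1 b1 l2pos le2 True assms(6) rpsi])
        then have i2: "r' * (1 - \<eta>) \<le> r" by simp
        show ?thesis by (rule final_arith[OF eta_pos eta_le i1 i2 eta_eps])
      next
        case False
        then obtain u0 where "\<not> 0 < measure M (Gset M \<theta> A \<phi> u0)" by blast
        then have G0: "measure M (Gset M \<theta> A \<phi> u0) = 0" using measure_nonneg[of M] by (simp add: order_antisym_conv not_less)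
        have r0: "r = 0" by (rule zero_case[OF P th A mphi c0(1) cC0 b0 G0 assms(6)])
        have "measure M (Gset M \<theta> A \<psi> ((1 + \<eta>) * u0)) \<le> measure M (Gset M \<theta> A \<phi> ((1 + \<eta>) * u0 / (1 + \<eta>)))"
          by (rule finite_measure_mono[OF Gset_cmp[OF th l1pos le1] Gset_sets[OF th A mphi]])
        also have "(1 + \<eta>) * u0 / (1 + \<eta>) = u0" using l1pos by simp
        finally have "measure M (Gset M \<theta> A \<psi> ((1 + \<eta>) * u0)) \<le> 0" using G0 by simp
        then have G0': "measure M (Gset M \<theta> A \<psi> ((1 + \<eta>) * u0)) = 0"
          using measure_nonneg[of M] by (simp add: order_antisym)
        have r'0: "r' = 0" by (rule zero_case[OF P th A mpsi c1(1) cC1 b1 G0' rpsi])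
        show ?thesis using r0 r'0 eps by simp
      qed
    qed
  qed
qed


end
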